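(* Let $Q$ be a finite closed down set of pairs with parameters $p,q,k$, $I_0,\dots,I_{k-1}$, $II_1,\dots,II_k$ as described in the context. Then $$\sum_{j=1}^k II_j=p\qquad\text{and}\qquad \sum_{j=0}^{k-1}I_j=q-p.$$
   Context: Let $c_1,c_2,\dots$ and $s_1,s_2,\dots$ be distinct vertices, and let $Q$ be a finite set of pairs $c_as_b$ that is closed down: $c_as_b\in Q$ implies $c_{a'}s_{b'}\in Q$ for all $a'\le a$, $b'\le b$. Write $[i]\times[j]=\{c_as_b:a\le i,b\le j\}$, and let $\nu(\ell,Q)$ be the matching number of the bipartite graph with sides $\{c_1,\dots,c_\ell\},\{s_1,\dots,s_\ell\}$ and edge set $([\ell]\times[\ell])\setminus Q$. Let $p\ge0$ be the largest integer with $[p]\times[p]\subseteq Q$, and $q\ge0$ the least integer such that $\nu(\ell,Q)=\ell$ for all $\ell\ge p+q$. For every $\ell>p$ one has $\nu(\ell,Q)-\nu(\ell-1,Q)\in\{1,2\}$. The integer interval $(p,p+q]$ is divided, in increasing order, into consecutive left-open right-closed integer intervals $\mathcal O_0,\mathcal T_1,\mathcal O_1,\dots,\mathcal O_{k-1},\mathcal T_k$ such that the increment $\nu(\ell,Q)-\nu(\ell-1,Q)$ is $1$ for $\ell$ in each $\mathcal O_j$ and $2$ for $\ell$ in each $\mathcal T_j$; all intervals except possibly $\mathcal O_0$ are nonempty and the last one is $\mathcal T_k$. Set $I_j=|\mathcal O_j|$ and $II_j=|\mathcal T_j|$. *)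

theory Defs
  imports Main
begin

text \<open>Pairs c_a s_b are encoded as (a,b) :: nat \<times> nat with a, b \<ge> 1.\<close>

definition closed_down :: "(nat \<times> nat) set \<Rightarrow> bool" where
  "closed_down Q \<longleftrightarrow> Q \<subseteq> {1..} \<times> {1..} \<and>
     (\<forall>a b a' b'. (a, b) \<in> Q \<longrightarrow> 1 \<le> a' \<longrightarrow> a' \<le> a \<longrightarrow> 1 \<le> b' \<longrightarrow> b' \<le> b \<longrightarrow> (a', b') \<in> Q)"

definition box :: "nat \<Rightarrow> nat \<Rightarrow> (nat \<times> nat) set" where
  "box i j = {1..i} \<times> {1..j}"

text \<open>A matching in the bipartite graph with sides {c_1..c_l}, {s_1..s_l} and edge set
  ([l] x [l]) minus Q: a set of edges no two of which share an endpoint.\<close>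
definition is_matching :: "nat \<Rightarrow> (nat \<times> nat) set \<Rightarrow> (nat \<times> nat) set \<Rightarrow> bool" where
  "is_matching l Q M \<longleftrightarrow> M \<subseteq> box l l - Q \<and> inj_on fst M \<and> inj_on snd M"

definition nu :: "nat \<Rightarrow> (nat \<times> nat) set \<Rightarrow> nat" where
  "nu l Q = Max {card M | M. is_matching l Q M}"

definition p_par :: "(nat \<times> nat) set \<Rightarrow> nat" where
  "p_par Q = (GREATEST p. box p p \<subseteq> Q)"

definition q_par :: "(nat \<times> nat) set \<Rightarrow> nat" where
  "q_par Q = (LEAST q. \<forall>l \<ge> p_par Q + q. nu l Q = l)"

definition incr :: "(nat \<times> nat) set \<Rightarrow> nat \<Rightarrow> int" where
  "incr Q l = int (nu l Q) - int (nu (l - 1) Q)"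

end

theory Submission
  imports Defs
begin

lemma tele:
  assumes "x \<le> y" "\<forall>l\<in>{x<..y}. incr Q l = c"
  shows "int (nu y Q) - int (nu x Q) = c * int (y - x)"
  using assms
proof (induction y)
  case 0
  then show ?case by simp
next
  case (Suc y)
  show ?case
  proof (cases "x = Suc y")
    case True then show ?thesis by simp
  next
    case False
    then have xy: "x \<le> y" using Suc.prems by simp
    have IH: "int (nu y Q) - int (nu x Q) = c * int (y - x)"
      using Suc.IH[OF xy] Suc.prems(2) by auto
    have "incr Q (Suc y) = c" using Suc.prems(2) xy by auto
    then have "int (nu (Suc y) Q) - int (nu y Q) = c" by (simp add: incr_def)
    then show ?thesis using IH xy by (simp add: Suc_diff_le algebra_simps)
  qed
qed

lemma nu_zero:
  assumes "box l l \<subseteq> Q"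
  shows "nu l Q = 0"
proof -
  have "{card M | M. is_matching l Q M} = {0}"
  proof -
    have "is_matching l Q M \<longleftrightarrow> M = {}" for M
      using assms by (auto simp: is_matching_def)
    then show ?thesis by auto
  qed
  then show ?thesis by (simp add: nu_def)
qed

lemma nu_full:
  assumes "\<forall>(a,b)\<in>Q. a \<le> N \<and> b \<le> N" "2 * N \<le> l"
  shows "nu l Q = l"
proof -
  let ?S = "{card M | M. is_matching l Q M}"
  have le: "card M \<le> l" if "is_matching l Q M" for M
  proof -
    have fin: "finite M" using that finite_subset[of M "box l l"] by (auto simp: is_matching_def box_def)
    have "card M = card (fst ` M)" using that by (simp add: is_matching_def card_image)
    also have "\<dots> \<le> card {1..l}"
      by (rule card_mono) (use that in \<open>auto simp: is_matching_def box_def\<close>)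
    finally show ?thesis by simp
  qed
  define M where "M = (\<lambda>i. (i, l + 1 - i)) ` {1..l}"
  have "is_matching l Q M"
  proof -
    have "M \<subseteq> box l l" unfolding M_def box_def by auto
    moreover have "M \<inter> Q = {}"
    proof (rule ccontr)
      assume "M \<inter> Q \<noteq> {}"
      then obtain i where "i \<in> {1..l}" "(i, l+1-i) \<in> Q" unfolding M_def by blast
      then have "i \<le> N" "l + 1 - i \<le> N" using assms(1) by auto
      then show False using assms(2) by linarith
    qed
    moreover have "inj_on fst M" unfolding M_def by (auto simp: inj_on_def)
    moreover have "inj_on snd M" unfolding M_def by (auto simp: inj_on_def)
    ultimately show ?thesis unfolding is_matching_def by auto
  qed
  moreover have "card M = l" unfolding M_def
    by (subst card_image) (auto simp: inj_on_def)
  ultimately have "l \<in> ?S" by auto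
  moreover have "finite ?S"
    by (rule finite_subset[of _ "{0..l}"]) (use le in auto)
  ultimately show ?thesis unfolding nu_def
    by (intro Max_eqI) (use le in auto)
qed

theorem corollary3:
  fixes Q :: "(nat \<times> nat) set" and k :: nat and b :: "nat \<Rightarrow> nat"
  assumes "finite Q" and "closed_down Q"
    and "b 0 = p_par Q" and "b (2 * k) = p_par Q + q_par Q"
    and "\<forall>i < 2 * k. b i \<le> b (Suc i)"
    and "\<forall>i. 1 \<le> i \<and> i < 2 * k \<longrightarrow> b i < b (Suc i)"
    and "\<forall>j < k. \<forall>l \<in> {b (2 * j)<..b (2 * j + 1)}. incr Q l = 1"
    and "\<forall>j \<in> {1..k}. \<forall>l \<in> {b (2 * j - 1)<..b (2 * j)}. incr Q l = 2"
  shows "(\<Sum>j = 1..k. b (2 * j) - b (2 * j - 1)) = p_par Q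
    \<and> int (\<Sum>j < k. b (2 * j + 1) - b (2 * j)) = int (q_par Q) - int (p_par Q)"
proof -
  have "finite (fst ` Q \<union> snd ` Q)" using assms(1) by simp
  then obtain N where N: "\<forall>x\<in>fst ` Q \<union> snd ` Q. x \<le> N"
    using finite_nat_set_iff_bounded_le by blast
  have NQ: "\<forall>(a,b)\<in>Q. a \<le> N \<and> b \<le> N" using N by force
  let ?p = "p_par Q" and ?q = "q_par Q"
  have pbox: "box ?p ?p \<subseteq> Q" unfolding p_par_def
  proof (rule GreatestI_nat[of _ 0 N])
    show "box 0 0 \<subseteq> Q" by (simp add: box_def)
  next
    fix y assume "box y y \<subseteq> Q"
    show "y \<le> N"
    proof (cases "y = 0")
      case False
      then have "(y,y) \<in> Q" using \<open>box y y \<subseteq> Q\<close> by (auto simp: box_def)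
      then show ?thesis using NQ by auto
    qed simp
  qed
  have nup: "nu ?p Q = 0" by (rule nu_zero[OF pbox])
  have "\<forall>l \<ge> ?p + ?q. nu l Q = l" unfolding q_par_def
    by (rule LeastI[of _ "2*N"]) (use nu_full[OF NQ] in auto)
  then have nupq: "nu (?p + ?q) Q = ?p + ?q" by simp
  define O' where "O' n = (\<Sum>j < n. b (2 * j + 1) - b (2 * j))" for n
  define T where "T n = (\<Sum>j = 1..n. b (2 * j) - b (2 * j - 1))" for n
  have main: "n \<le> k \<Longrightarrow> int (nu (b (2*n)) Q) - int (nu (b 0) Q) = int (O' n) + 2 * int (T n)
      \<and> b (2*n) = b 0 + O' n + T n" for n
  proof (induction n)
    case 0
    then show ?case by (simp add: O'_def T_def)
  next
    case (Suc n)
    then have IH: "int (nu (b (2*n)) Q) - int (nu (b 0) Q) = int (O' n) + 2 * int (T n)"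
      "b (2*n) = b 0 + O' n + T n" by auto
    have m1: "b (2*n) \<le> b (2*n+1)" using assms(5)[rule_format, of "2*n"] Suc.prems by simp
    have m2: "b (2*n+1) \<le> b (2*n+2)" using assms(5)[rule_format, of "2*n+1"] Suc.prems by simp
    have t1: "int (nu (b (2*n+1)) Q) - int (nu (b (2*n)) Q) = 1 * int (b (2*n+1) - b (2*n))"
      proof (rule tele[OF m1])
      have "n < k" using Suc.prems by simp
      then show "\<forall>l\<in>{b (2 * n)<..b (2 * n + 1)}. incr Q l = 1" using assms(7) by simp
    qed
    have t2: "int (nu (b (2*n+2)) Q) - int (nu (b (2*n+1)) Q) = 2 * int (b (2*n+2) - b (2*n+1))"
    proof (rule tele[OF m2])
      have "Suc n \<in> {1..k}" using Suc.prems by auto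
      then have "\<forall>l \<in> {b (2 * Suc n - 1)<..b (2 * Suc n)}. incr Q l = 2" using assms(8) by blast
      moreover have "2 * Suc n - 1 = 2*n+1" "2 * Suc n = 2*n+2" by auto
      ultimately show "\<forall>l\<in>{b (2 * n + 1)<..b (2 * n + 2)}. incr Q l = 2" by simp
    qed
    have O's: "O' (Suc n) = O' n + (b (2*n+1) - b (2*n))" by (simp add: O'_def)
    have Ts: "T (Suc n) = T n + (b (2*n+2) - b (2*n+1))"
      by (simp add: T_def)
    show ?case using IH t1 t2 O's Ts m1 m2 by (simp add: algebra_simps of_nat_diff)
  qed
  from main[of k] have A: "int (?p + ?q) - 0 = int (O' k) + 2 * int (T k)"
    and B: "?p + ?q = ?p + O' k + T k"
    using assms(3,4) nup nupq by auto
  have "T k = ?p" using A B by linarith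
  moreover have "int (O' k) = int ?q - int ?p" using A B by linarith
  ultimately show ?thesis by (simp add: O'_def T_def)
qed

end
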